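(* Let $w\in\mathcal W_0$ and let $(w_n)_{n\in\mathbb N}$ be a sequence in $\mathcal W_0$ with $\delta_\Box(w_n,w)\to0$. Then $\tilde\Gamma(w_n)\to\tilde\Gamma(w)$ as $n\to\infty$.
   Context: $\mathcal W_0$ is the set of symmetric measurable functions $[0,1]^2\to[0,1]$. $\Phi$ is the set of invertible maps $\phi:[0,1]\to[0,1]$ such that $\phi$ and $\phi^{-1}$ are measure preserving; $w^\phi(x,y)=w(\phi(x),\phi(y))$. Cut norm: $\|w\|_\Box=\sup_{S,T}\big|\int_{S\times T}w\big|$ over measurable $S,T\subseteq[0,1]$; cut distance $\delta_\Box(w_1,w_2)=\inf_{\phi\in\Phi}\|w_1-w_2^\phi\|_\Box$. With $[x]_+=\max(x,0)$, $\Gamma(w,A)=\iint_{y<z}\big[\int_{A\cap[0,y]}(w(x,z)-w(x,y))dx\big]_+dy\,dz+\iint_{y<z}\big[\int_{A\cap[z,1]}(w(x,y)-w(x,z))dx\big]_+dy\,dz$ for measurable $A\subseteq[0,1]$, $\Gamma(w)=\sup_A\Gamma(w,A)$, and $\tilde\Gamma(w)=\inf_{\phi\in\Phi}\Gamma(w^\phi)$. *)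

theory Defs
  imports "HOL-Analysis.Analysis"
begin

definition I01 :: "real measure" where
  "I01 = restrict_space lborel {0..1}"

definition W0 :: "(real \<Rightarrow> real \<Rightarrow> real) set" where
  "W0 = {w. (\<lambda>(x,y). w x y) \<in> borel_measurable (I01 \<Otimes>\<^sub>M I01)
            \<and> (\<forall>x\<in>{0..1}. \<forall>y\<in>{0..1}. w x y = w y x \<and> 0 \<le> w x y \<and> w x y \<le> 1)}"

definition meas_pres :: "(real \<Rightarrow> real) \<Rightarrow> bool" where
  "meas_pres f \<longleftrightarrow> f \<in> measurable I01 I01 \<and>
     (\<forall>B\<in>sets I01. emeasure I01 (f -` B \<inter> space I01) = emeasure I01 B)"

definition Phi :: "(real \<Rightarrow> real) set" where
  "Phi = {\<phi>. bij_betw \<phi> {0..1} {0..1} \<and> meas_pres \<phi> \<and> meas_pres (the_inv_into {0..1} \<phi>)}"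

definition relabel :: "(real \<Rightarrow> real \<Rightarrow> real) \<Rightarrow> (real \<Rightarrow> real) \<Rightarrow> real \<Rightarrow> real \<Rightarrow> real" where
  "relabel w \<phi> = (\<lambda>x y. w (\<phi> x) (\<phi> y))"

definition cut_norm :: "(real \<Rightarrow> real \<Rightarrow> real) \<Rightarrow> real" where
  "cut_norm w = Sup {\<bar>LINT p|(I01 \<Otimes>\<^sub>M I01). indicator (S \<times> T) p * w (fst p) (snd p)\<bar>
                     | S T. S \<in> sets I01 \<and> T \<in> sets I01}"

definition cut_dist :: "(real \<Rightarrow> real \<Rightarrow> real) \<Rightarrow> (real \<Rightarrow> real \<Rightarrow> real) \<Rightarrow> real" where
  "cut_dist w1 w2 = Inf {cut_norm (\<lambda>x y. w1 x y - relabel w2 \<phi> x y) | \<phi>. \<phi> \<in> Phi}"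

definition Gamma_A :: "(real \<Rightarrow> real \<Rightarrow> real) \<Rightarrow> real set \<Rightarrow> real" where
  "Gamma_A w A =
     (LINT p|(I01 \<Otimes>\<^sub>M I01). indicator {(y,z). y < z} p *
        max 0 (LINT x|I01. indicator (A \<inter> {0..fst p}) x * (w x (snd p) - w x (fst p))))
   + (LINT p|(I01 \<Otimes>\<^sub>M I01). indicator {(y,z). y < z} p *
        max 0 (LINT x|I01. indicator (A \<inter> {snd p..1}) x * (w x (fst p) - w x (snd p))))"

definition Gamma :: "(real \<Rightarrow> real \<Rightarrow> real) \<Rightarrow> real" where
  "Gamma w = Sup {Gamma_A w A | A. A \<in> sets I01}"

definition Gamma_tilde :: "(real \<Rightarrow> real \<Rightarrow> real) \<Rightarrow> real" where
  "Gamma_tilde w = Inf {Gamma (relabel w \<phi>) | \<phi>. \<phi> \<in> Phi}"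

end

theory Submission
  imports Defs
begin


lemma space_I01[simp]: "space I01 = {0..1}" by (simp add: I01_def sets_restrict_space)
lemma sets_I01: "sets I01 = sets (restrict_space borel {0..1::real})" unfolding I01_def by (simp add: sets_restrict_space)
lemma emeasure_I01: "A \<in> sets I01 \<Longrightarrow> emeasure I01 A = emeasure lborel A"
  unfolding I01_def by (simp add: emeasure_restrict_space sets_restrict_space_iff) 

lemma I01_fin: "finite_measure I01"
  unfolding I01_def by (intro finite_measureI) (simp add: emeasure_restrict_space)

interpretation I01: finite_measure I01 by (rule I01_fin)
interpretation I01P: pair_sigma_finite I01 I01 by unfold_locales
lemma measure_I01_space: "measure I01 {0..1} = 1"
  unfolding I01_def by (simp add: measure_restrict_space)

lemma ident_meas[measurable]: "(\<lambda>x. x) \<in> borel_measurable I01"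
  unfolding I01_def by (simp add: measurable_restrict_space1)

definition M2 :: "(real \<times> real) measure" where "M2 = I01 \<Otimes>\<^sub>M I01"
lemma space_M2[simp]: "space M2 = {0..1} \<times> {0..1}" by (simp add: M2_def space_pair_measure)
lemma M2_fin: "finite_measure M2" unfolding M2_def by (rule finite_measure_pair_measure) (fact I01_fin)+
interpretation M2: finite_measure M2 by (rule M2_fin)

definition gm :: "(real \<Rightarrow> real \<Rightarrow> real) \<Rightarrow> bool" where
  "gm f \<longleftrightarrow> (\<lambda>p. f (fst p) (snd p)) \<in> borel_measurable M2"
definition bd :: "(real \<Rightarrow> real \<Rightarrow> real) \<Rightarrow> real \<Rightarrow> bool" where
  "bd f B \<longleftrightarrow> (\<forall>x\<in>{0..1}. \<forall>y\<in>{0..1}. \<bar>f x y\<bar> \<le> B)"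

lemma gm_comp:
  assumes "gm d" "f \<in> measurable N I01" "g \<in> measurable N I01"
  shows "(\<lambda>t. d (f t) (g t)) \<in> borel_measurable N"
proof -
  have "(\<lambda>t. (f t, g t)) \<in> measurable N M2" unfolding M2_def using assms by measurable
  from measurable_compose[OF this assms(1)[unfolded gm_def]] show ?thesis by simp
qed

lemma int_I01: "f \<in> borel_measurable I01 \<Longrightarrow> (\<And>x. x\<in>{0..1} \<Longrightarrow> \<bar>f x\<bar> \<le> (B::real)) \<Longrightarrow> integrable I01 f"
  by (rule I01.integrable_const_bound[where B=B]) auto
lemma int_M2: "f \<in> borel_measurable M2 \<Longrightarrow> (\<And>x y. x\<in>{0..1} \<Longrightarrow> y\<in>{0..1} \<Longrightarrow> \<bar>f (x,y)\<bar> \<le> (B::real)) \<Longrightarrow> integrable M2 f"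
  by (rule M2.integrable_const_bound[where B=B]) auto
lemma ind_le_meas: 
  assumes "f \<in> measurable N I01" "g \<in> measurable N I01"
  shows "(\<lambda>t. indicator {0..f t} (g t) :: real) \<in> borel_measurable N"
       "(\<lambda>t. indicator {f t..1} (g t) :: real) \<in> borel_measurable N"
proof -
  have [measurable]: "f \<in> borel_measurable N" "g \<in> borel_measurable N"
    using measurable_compose[OF assms(1) ident_meas] measurable_compose[OF assms(2) ident_meas] by auto
  have "(\<lambda>t. indicator {0..f t} (g t) :: real) = (\<lambda>t. if 0 \<le> g t \<and> g t \<le> f t then 1 else 0)"
    by (auto simp: indicator_def)
  also have "\<dots> \<in> borel_measurable N" by measurable
  finally show "(\<lambda>t. indicator {0..f t} (g t) :: real) \<in> borel_measurable N" .
  have "(\<lambda>t. indicator {f t..1} (g t) :: real) = (\<lambda>t. if f t \<le> g t \<and> g t \<le> 1 then 1 else 0)"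
    by (auto simp: indicator_def)
  also have "\<dots> \<in> borel_measurable N" by measurable
  finally show "(\<lambda>t. indicator {f t..1} (g t) :: real) \<in> borel_measurable N" .
qed

lemma ind_set_meas: "A \<in> sets I01 \<Longrightarrow> g \<in> measurable N I01 \<Longrightarrow> (\<lambda>t. indicator A (g t) :: real) \<in> borel_measurable N"
  using measurable_compose[of g N I01 "indicator A"] borel_measurable_indicator by auto


lemma int_bound_I01:
  assumes "\<And>x. x\<in>{0..1} \<Longrightarrow> \<bar>f x\<bar> \<le> (B::real)"
  shows "\<bar>LINT x|I01. f x\<bar> \<le> B"
proof (cases "integrable I01 f")
  case True
  have "\<bar>LINT x|I01. f x\<bar> \<le> (LINT x|I01. \<bar>f x\<bar>)" by (rule integral_abs_bound)
  also have "\<dots> \<le> (LINT x|I01. B)" using True assms by (intro integral_mono) auto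
  also have "\<dots> = B" using measure_I01_space by simp
  finally show ?thesis .
next
  case False then show ?thesis using assms[of 0] by (simp add: not_integrable_integral_eq)
qed

lemma measure_M2_space: "measure M2 ({0..1} \<times> {0..1}) = 1"
proof -
  have e: "emeasure I01 {0..1} = 1" unfolding I01_def by (simp add: emeasure_restrict_space)
  have "emeasure M2 ({0..1} \<times> {0..1}) = 1"
    unfolding M2_def using I01.emeasure_pair_measure_Times[of "{0..1}" I01 "{0..1}"] e
    by (metis mult_1 sets.top space_I01)
  then show ?thesis by (simp add: measure_def)
qed

lemma int_bound_M2:
  assumes "\<And>x y. x\<in>{0..1} \<Longrightarrow> y\<in>{0..1} \<Longrightarrow> \<bar>f (x,y)\<bar> \<le> (B::real)"
  shows "\<bar>LINT p|M2. f p\<bar> \<le> B"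
proof (cases "integrable M2 f")
  case True
  have "\<bar>LINT x|M2. f x\<bar> \<le> (LINT x|M2. \<bar>f x\<bar>)" by (rule integral_abs_bound)
  also have "\<dots> \<le> (LINT x|M2. B)" using True assms by (intro integral_mono) auto
  also have "\<dots> = B" using measure_M2_space by simp
  finally show ?thesis .
next
  case False then show ?thesis using assms[of 0 0] by (simp add: not_integrable_integral_eq)
qed

lemma CN1:
  assumes "bd d B" "S \<in> sets I01" "T \<in> sets I01"
  shows "\<bar>LINT p|M2. indicator (S\<times>T) p * d (fst p) (snd p)\<bar> \<le> cut_norm d"
  unfolding cut_norm_def M2_def[symmetric]
proof (rule cSup_upper)
  show "bdd_above {\<bar>LINT p|M2. indicator (S \<times> T) p * d (fst p) (snd p)\<bar> |S T. S \<in> sets I01 \<and> T \<in> sets I01}"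
  proof (rule bdd_aboveI, safe)
    fix S T :: "real set"
    show "\<bar>LINT p|M2. indicator (S \<times> T) p * d (fst p) (snd p)\<bar> \<le> B"
    proof (rule int_bound_M2)
      fix x y :: real assume "x \<in> {0..1}" "y \<in> {0..1}"
      moreover have "0 \<le> B" using assms(1) unfolding bd_def by (meson abs_ge_zero atLeastAtMost_iff order.trans order_refl zero_le_one)
      ultimately show "\<bar>indicator (S \<times> T) (x, y) * d (fst (x, y)) (snd (x, y))\<bar> \<le> B"
        using assms(1) by (auto simp: bd_def indicator_def)
    qed
  qed
qed (use assms in auto)

lemma bd_nonneg: "bd d B \<Longrightarrow> 0 \<le> B"
  unfolding bd_def by (meson abs_ge_zero atLeastAtMost_iff order.trans order_refl zero_le_one)

lemma P1:
  assumes gd: "gm d" and bdd: "bd d B" and S: "S \<in> sets I01"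
  shows "(LINT z|I01. \<bar>LINT x|I01. indicator S x * d x z\<bar>) \<le> 2 * cut_norm d"
proof -
  define g where "g z = (LINT x|I01. indicator S x * d x z)" for z
  have B0: "0 \<le> B" using bdd by (rule bd_nonneg)
  have mf: "(\<lambda>p. indicator S (snd p) * d (snd p) (fst p) :: real) \<in> borel_measurable (I01 \<Otimes>\<^sub>M I01)"
  proof -
    have m: "snd \<in> measurable (I01 \<Otimes>\<^sub>M I01) I01" "fst \<in> measurable (I01 \<Otimes>\<^sub>M I01) I01" by measurable
    show ?thesis using ind_set_meas[OF S m(1)] gm_comp[OF gd m(1) m(2)] by simp
  qed
  have gm[measurable]: "g \<in> borel_measurable I01"
    unfolding g_def using I01.borel_measurable_lebesgue_integral[of "\<lambda>z x. indicator S x * d x z" I01] mf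
    by (simp add: split_beta')
  have gb: "\<bar>g z\<bar> \<le> B" if "z \<in> {0..1}" for z
    unfolding g_def by (rule int_bound_I01) (use bdd that B0 in \<open>auto simp: bd_def indicator_def\<close>)
  define T where "T = {z\<in>{0..1}. 0 \<le> g z}"
  define T' where "T' = {z\<in>{0..1}. g z < 0}"
  have "{z\<in>space I01. 0 \<le> g z} \<in> sets I01" by measurable
  then have T: "T \<in> sets I01" unfolding T_def by simp
  have "{z\<in>space I01. g z < 0} \<in> sets I01" by measurable
  then have T': "T' \<in> sets I01" unfolding T'_def by simp
  have key: "(LINT z|I01. indicator U z * g z) = (LINT p|M2. indicator (S\<times>U) p * d (fst p) (snd p))"
    if U: "U \<in> sets I01" for U
  proof -
    have "(LINT z|I01. indicator U z * g z) = (LINT z|I01. LINT x|I01. indicator S x * indicator U z * d x z)"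
      unfolding g_def by (intro Bochner_Integration.integral_cong refl, subst integral_mult_right_zero[symmetric]) (auto intro!: Bochner_Integration.integral_cong simp: mult_ac)
    also have "\<dots> = integral\<^sup>L (I01 \<Otimes>\<^sub>M I01) (\<lambda>(x,z). indicator S x * indicator U z * d x z)"
    proof (rule I01P.integral_snd)
      have m: "snd \<in> measurable (I01 \<Otimes>\<^sub>M I01) I01" "fst \<in> measurable (I01 \<Otimes>\<^sub>M I01) I01" by measurable
      show "integrable (I01 \<Otimes>\<^sub>M I01) (\<lambda>(x,z). indicator S x * indicator U z * d x z)"
        unfolding M2_def[symmetric]
      proof (rule int_M2)
        show "(\<lambda>(x,z). indicator S x * indicator U z * d x z) \<in> borel_measurable M2"
          unfolding M2_def split_beta' using ind_set_meas[OF S m(2)] ind_set_meas[OF U m(1)] gm_comp[OF gd m(2) m(1)] by simp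
        show "\<bar>(case (x, y) of (x, z) \<Rightarrow> indicator S x * indicator U z * d x z)\<bar> \<le> B"
          if "x \<in> {0..1}" "y \<in> {0..1}" for x y
          using bdd that B0 by (auto simp: bd_def indicator_def)
      qed
    qed
    also have "\<dots> = (LINT p|M2. indicator (S\<times>U) p * d (fst p) (snd p))"
      unfolding M2_def by (intro Bochner_Integration.integral_cong) (auto simp: indicator_def)
    finally show ?thesis .
  qed
  have intg: "integrable I01 (\<lambda>z. indicator U z * g z)" if "U \<in> sets I01" for U
    by (rule int_I01[where B=B]) (use that gb B0 in \<open>auto simp: indicator_def\<close>)
  have "(LINT z|I01. \<bar>g z\<bar>) = (LINT z|I01. indicator T z * g z - indicator T' z * g z)"
    by (intro Bochner_Integration.integral_cong) (auto simp: T_def T'_def indicator_def)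
  also have "\<dots> = (LINT z|I01. indicator T z * g z) - (LINT z|I01. indicator T' z * g z)"
    using intg[OF T] intg[OF T'] by (rule Bochner_Integration.integral_diff)
  also have "\<dots> \<le> 2 * cut_norm d"
    using CN1[OF bdd S T] CN1[OF bdd S T'] unfolding key[OF T] key[OF T'] by linarith
  finally show ?thesis unfolding g_def .
qed
definition kap :: "nat \<Rightarrow> real \<Rightarrow> nat" where "kap m x = min (nat \<lfloor>real m * x\<rfloor>) (m - 1)"
definition Ik :: "nat \<Rightarrow> nat \<Rightarrow> real set" where "Ik m k = {x\<in>{0..1}. kap m x = k}"

lemma kap_meas: "kap m \<in> measurable I01 (count_space UNIV)"
proof -
  have "(\<lambda>x::real. real m * x) \<in> borel_measurable I01" by measurable
  then have "(\<lambda>x. \<lfloor>real m * x\<rfloor>) \<in> measurable I01 (count_space UNIV)"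
    using measurable_compose measurable_real_floor by blast
  then show ?thesis unfolding kap_def
    using measurable_compose[of _ I01 "count_space UNIV" "\<lambda>i. min (nat i) (m - 1)" "count_space UNIV"]
    by (simp add: o_def)
qed

lemma Ik_sets: "Ik m k \<in> sets I01"
proof -
  have "kap m -` {k} \<inter> space I01 \<in> sets I01"
    using measurable_sets[OF kap_meas, of "{k}"] by simp
  moreover have "kap m -` {k} \<inter> space I01 = Ik m k" by (auto simp: Ik_def)
  ultimately show ?thesis by simp
qed

lemma kap_lt: assumes "0 < m" "x \<in> {0..1}" "y \<in> {0..1}" "kap m x < kap m y" shows "x < y"
proof -
  have "kap m x < m - 1" using assms(4) unfolding kap_def by linarith
  then have "kap m x = nat \<lfloor>real m * x\<rfloor>" unfolding kap_def by auto
  moreover have "kap m y \<le> nat \<lfloor>real m * y\<rfloor>" unfolding kap_def by auto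
  ultimately have "nat \<lfloor>real m * x\<rfloor> < nat \<lfloor>real m * y\<rfloor>" using assms(4) by linarith
  then have "\<lfloor>real m * x\<rfloor> < \<lfloor>real m * y\<rfloor>" by linarith
  then have "real m * x < real m * y" by (meson floor_mono not_less)
  then show ?thesis using assms(1) by simp
qed

lemma Ik_sub: assumes "0 < m" shows "Ik m k \<subseteq> {real k / m .. (real k + 1) / m}"
proof
  fix x assume x: "x \<in> Ik m k"
  then have x01: "0 \<le> x" "x \<le> 1" and kx: "kap m x = k" by (auto simp: Ik_def)
  have lo: "real k \<le> real m * x"
  proof -
    have "k \<le> nat \<lfloor>real m * x\<rfloor>" using kx unfolding kap_def by linarith
    moreover have "0 \<le> real m * x" using x01 by simp
    ultimately show ?thesis by linarith
  qed
  have hi: "real m * x \<le> real k + 1"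
  proof (cases "nat \<lfloor>real m * x\<rfloor> \<le> m - 1")
    case True
    then have "k = nat \<lfloor>real m * x\<rfloor>" using kx unfolding kap_def by simp
    then show ?thesis using x01 by linarith
  next
    case False
    then have "k = m - 1" using kx unfolding kap_def by simp
    moreover have "real m * x \<le> real m" using x01 by (simp add: mult_left_le)
    ultimately show ?thesis using assms by (simp add: of_nat_diff)
  qed
  show "x \<in> {real k / m .. (real k + 1) / m}"
    using lo hi assms by (auto simp: field_simps)
qed

lemma measure_Ik: assumes "0 < m" shows "measure I01 (Ik m k) \<le> 1 / m"
proof -
  have "measure I01 (Ik m k) = measure lborel (Ik m k)"
    using Ik_sets[of m k] emeasure_I01[of "Ik m k"] by (simp add: measure_def)
  also have "\<dots> \<le> measure lborel {real k / m .. (real k + 1) / m}"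
  proof (rule measure_mono_fmeasurable)
    show "Ik m k \<subseteq> {real k / m .. (real k + 1) / m}" using Ik_sub[OF assms] .
    show "Ik m k \<in> sets lborel" using Ik_sets[of m k] unfolding sets_I01 by (simp add: sets_restrict_space_iff)
    show "{real k / m .. (real k + 1) / m} \<in> fmeasurable lborel" by (simp add: fmeasurable_def emeasure_lborel_Icc_eq)
  qed
  also have "\<dots> = 1 / m" using assms by (simp add: field_simps)
  finally show ?thesis .
qed

lemma kap_lt_m: "0 < m \<Longrightarrow> kap m x < m" unfolding kap_def by auto

lemma int_ind_bound:
  assumes "f \<in> borel_measurable I01" "S \<in> sets I01" "\<And>x. x \<in> {0..1} \<Longrightarrow> \<bar>f x\<bar> \<le> (B::real)"
  shows "\<bar>LINT x|I01. indicator S x * f x\<bar> \<le> B * measure I01 S"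
proof -
  have B0: "0 \<le> B" using assms(3)[of 0] by auto
  have i1: "integrable I01 (\<lambda>x. indicator S x * f x)"
    by (rule int_I01[where B=B]) (use assms B0 in \<open>auto simp: indicator_def\<close>)
  have "\<bar>LINT x|I01. indicator S x * f x\<bar> \<le> (LINT x|I01. \<bar>indicator S x * f x\<bar>)" by (rule integral_abs_bound)
  also have "\<dots> \<le> (LINT x|I01. indicator S x * B)"
  proof (rule integral_mono)
    show "integrable I01 (\<lambda>x. indicator S x * B)"
      by (rule int_I01[where B=B]) (use assms B0 borel_measurable_indicator[OF assms(2)] in \<open>auto simp: indicator_def\<close>)
    show "integrable I01 (\<lambda>x. \<bar>indicator S x * f x\<bar>)" using i1 by simp
    show "\<bar>indicator S x * f x\<bar> \<le> indicator S x * B" if "x \<in> space I01" for x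
      using assms that by (auto simp: indicator_def)
  qed
  also have "\<dots> = (LINT x|I01. indicator S x) * B" by (rule integral_mult_left_zero)
  also have "\<dots> = B * measure I01 S" using assms(2) I01.emeasure_finite[of S] sets.sets_into_space[OF assms(2)] by (simp add: mult.commute Int_absorb2)
  finally show ?thesis .
qed

lemma P2:
  fixes Bs :: "real \<Rightarrow> real set"
  assumes gd: "gm d" and bdd: "bd d B" and A: "A \<in> sets I01" and m: "0 < m"
    and hB: "(\<lambda>p. indicator (Bs (fst p)) (snd p) :: real) \<in> borel_measurable M2"
    and hS: "\<And>x y. x \<in> {0..1} \<Longrightarrow> y \<in> {0..1} \<Longrightarrow> kap m x \<noteq> kap m y \<Longrightarrow>
               (x \<in> Bs y \<longleftrightarrow> x \<in> A \<and> (kap m x < kap m y \<longleftrightarrow> c))"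
  shows "(LINT y|I01. \<bar>LINT x|I01. indicator (Bs y) x * d x y\<bar>) \<le> 2 * m * cut_norm d + B / m"
proof -
  have B0: "0 \<le> B" using bdd by (rule bd_nonneg)
  define g where "g k y = (LINT x|I01. indicator (A \<inter> Ik m k) x * d x y)" for k y
  define F where "F y = (LINT x|I01. indicator (Bs y) x * d x y)" for y
  have mFst: "fst \<in> measurable M2 I01" "snd \<in> measurable M2 I01" unfolding M2_def by measurable
  have AIk: "A \<inter> Ik m k \<in> sets I01" for k using A Ik_sets by auto
  have mF: "F \<in> borel_measurable I01"
  proof -
    have "(\<lambda>p. indicator (Bs (fst p)) (snd p) * d (snd p) (fst p) :: real) \<in> borel_measurable (I01 \<Otimes>\<^sub>M I01)"
      using hB gm_comp[OF gd mFst(2) mFst(1)] unfolding M2_def by simp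
    then show ?thesis unfolding F_def
      using I01.borel_measurable_lebesgue_integral[of "\<lambda>y x. indicator (Bs y) x * d x y" I01]
      by (simp add: split_beta')
  qed
  have mg: "g k \<in> borel_measurable I01" for k
  proof -
    have "(\<lambda>p. indicator (A \<inter> Ik m k) (snd p) * d (snd p) (fst p) :: real) \<in> borel_measurable (I01 \<Otimes>\<^sub>M I01)"
      using ind_set_meas[OF AIk mFst(2)] gm_comp[OF gd mFst(2) mFst(1)] unfolding M2_def by simp
    then show ?thesis unfolding g_def
      using I01.borel_measurable_lebesgue_integral[of "\<lambda>y x. indicator (A \<inter> Ik m k) x * d x y" I01]
      by (simp add: split_beta')
  qed
  have gb: "\<bar>g k y\<bar> \<le> B" if "y \<in> {0..1}" for k y
    unfolding g_def by (rule int_bound_I01) (use bdd that B0 in \<open>auto simp: bd_def indicator_def\<close>)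
  have Fb: "\<bar>F y\<bar> \<le> B" if "y \<in> {0..1}" for y
    unfolding F_def by (rule int_bound_I01) (use bdd that B0 in \<open>auto simp: bd_def indicator_def\<close>)
  have pw: "\<bar>F y\<bar> \<le> (\<Sum>k<m. \<bar>g k y\<bar>) + B / m" if y: "y \<in> {0..1}" for y
  proof -
    have ys: "y \<in> space I01" using y by simp
    have py: "(\<lambda>x. (y, x)) \<in> measurable I01 M2" unfolding M2_def by (intro measurable_Pair measurable_const ys measurable_ident_sets refl)
    have mBy: "(\<lambda>x. indicator (Bs y) x :: real) \<in> borel_measurable I01"
      using measurable_compose[OF py hB] by simp
    have mdy: "(\<lambda>x. d x y) \<in> borel_measurable I01"
    proof -
      have "(\<lambda>x. x) \<in> measurable I01 I01" by (rule measurable_ident_sets) simp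
      moreover have "(\<lambda>x. y) \<in> measurable I01 I01" using y by simp
      ultimately show ?thesis using gm_comp[OF gd] by blast
    qed
    define t where "t k = (LINT x|I01. indicator (Bs y) x * indicator (Ik m k) x * d x y)" for k
    have "F y = (LINT x|I01. (\<Sum>k<m. indicator (Bs y) x * indicator (Ik m k) x * d x y))"
      unfolding F_def
    proof (intro Bochner_Integration.integral_cong refl)
      fix x assume x: "x \<in> space I01"
      have "(\<Sum>k<m. indicator (Ik m k) x :: real) = (\<Sum>k<m. if k = kap m x then 1 else 0)"
        using x by (intro sum.cong) (auto simp: Ik_def indicator_def)
      also have "\<dots> = 1" using kap_lt_m[OF m] by simp
      finally have "(\<Sum>k<m. indicator (Ik m k) x :: real) = 1" .
      then show "indicator (Bs y) x * d x y = (\<Sum>k<m. indicator (Bs y) x * indicator (Ik m k) x * d x y)"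
      proof -
        have "(\<Sum>k<m. indicator (Bs y) x * indicator (Ik m k) x * d x y) = indicator (Bs y) x * d x y * (\<Sum>k<m. indicator (Ik m k) x)"
          by (simp add: sum_distrib_left mult_ac)
        then show ?thesis using \<open>(\<Sum>k<m. indicator (Ik m k) x :: real) = 1\<close> by simp
      qed
    qed
    also have "\<dots> = (\<Sum>k<m. t k)" unfolding t_def
    proof (rule Bochner_Integration.integral_sum)
      fix k show "integrable I01 (\<lambda>x. indicator (Bs y) x * indicator (Ik m k) x * d x y)"
        by (rule int_I01[where B=B]) (use mBy mdy Ik_sets bdd y B0 in \<open>auto simp: bd_def indicator_def\<close>)
    qed
    finally have Fy: "F y = (\<Sum>k<m. t k)" .
    have tk: "\<bar>t k\<bar> \<le> \<bar>g k y\<bar> + (if k = kap m y then B / m else 0)" for k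
    proof (cases "k = kap m y")
      case True
      have "\<bar>t k\<bar> = \<bar>LINT x|I01. indicator (Ik m k) x * (indicator (Bs y) x * d x y)\<bar>"
        unfolding t_def by (simp add: mult_ac)
      also have "\<dots> \<le> B * measure I01 (Ik m k)"
        by (rule int_ind_bound) (use mBy mdy Ik_sets bdd y B0 in \<open>auto simp: bd_def indicator_def\<close>)
      also have "\<dots> \<le> B * (1 / m)" using measure_Ik[OF m] B0 by (intro mult_left_mono) auto
      finally show ?thesis using True by simp
    next
      case False
      have "t k = (if (k < kap m y \<longleftrightarrow> c) then g k y else 0)"
        unfolding t_def g_def
      proof (cases "k < kap m y \<longleftrightarrow> c")
        case True
        have "(LINT x|I01. indicator (Bs y) x * indicator (Ik m k) x * d x y) = (LINT x|I01. indicator (A \<inter> Ik m k) x * d x y)"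
        proof (intro Bochner_Integration.integral_cong refl)
          fix x assume x: "x \<in> space I01"
          show "indicator (Bs y) x * indicator (Ik m k) x * d x y = indicator (A \<inter> Ik m k) x * d x y"
          proof (cases "kap m x = k")
            case True then show ?thesis using hS[of x y] x y False \<open>k < kap m y \<longleftrightarrow> c\<close> by (auto simp: indicator_def Ik_def)
          qed (auto simp: indicator_def Ik_def)
        qed
        then show "(LINT x|I01. indicator (Bs y) x * indicator (Ik m k) x * d x y) = (if (k < kap m y \<longleftrightarrow> c) then (LINT x|I01. indicator (A \<inter> Ik m k) x * d x y) else 0)"
          using True by simp
      next
        case False'': False
        have "(LINT x|I01. indicator (Bs y) x * indicator (Ik m k) x * d x y) = (LINT x|I01. 0)"
        proof (intro Bochner_Integration.integral_cong refl)
          fix x assume x: "x \<in> space I01"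
          show "indicator (Bs y) x * indicator (Ik m k) x * d x y = 0"
          proof (cases "kap m x = k")
            case True then show ?thesis using hS[of x y] x y False False'' by (auto simp: indicator_def Ik_def)
          qed (auto simp: indicator_def Ik_def)
        qed
        then show "(LINT x|I01. indicator (Bs y) x * indicator (Ik m k) x * d x y) = (if (k < kap m y \<longleftrightarrow> c) then (LINT x|I01. indicator (A \<inter> Ik m k) x * d x y) else 0)"
          using False'' by simp
      qed
      then show ?thesis using False by simp
    qed
    have "\<bar>F y\<bar> \<le> (\<Sum>k<m. \<bar>t k\<bar>)" unfolding Fy by (rule sum_abs)
    also have "\<dots> \<le> (\<Sum>k<m. \<bar>g k y\<bar> + (if k = kap m y then B / m else 0))"
      by (rule sum_mono) (rule tk)
    also have "\<dots> = (\<Sum>k<m. \<bar>g k y\<bar>) + B / m"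
      using kap_lt_m[OF m, of y] by (simp add: sum.distrib)
    finally show ?thesis .
  qed
  have ig: "integrable I01 (\<lambda>y. \<bar>g k y\<bar>)" for k
    by (rule int_I01[where B=B]) (use mg gb in auto)
  have "(LINT y|I01. \<bar>F y\<bar>) \<le> (LINT y|I01. (\<Sum>k<m. \<bar>g k y\<bar>) + B / m)"
  proof (rule integral_mono)
    show "integrable I01 (\<lambda>y. \<bar>F y\<bar>)" by (rule int_I01[where B=B]) (use mF Fb in auto)
    show "integrable I01 (\<lambda>y. (\<Sum>k<m. \<bar>g k y\<bar>) + B / m)"
      using ig by (intro Bochner_Integration.integrable_add Bochner_Integration.integrable_sum) auto
    show "\<bar>F y\<bar> \<le> (\<Sum>k<m. \<bar>g k y\<bar>) + B / m" if "y \<in> space I01" for y using pw that by simp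
  qed
  also have "\<dots> = (\<Sum>k<m. LINT y|I01. \<bar>g k y\<bar>) + B / m"
    using ig measure_I01_space
    by (subst Bochner_Integration.integral_add) (auto simp: Bochner_Integration.integral_sum)
  also have "\<dots> \<le> (\<Sum>k<m. 2 * cut_norm d) + B / m"
    unfolding g_def by (intro add_right_mono sum_mono P1[OF gd bdd AIk])
  also have "\<dots> = 2 * real m * cut_norm d + B / m" by simp
  finally show ?thesis unfolding F_def .
qed
lemma PM:
  fixes Bs :: "real \<Rightarrow> real set" and N :: "'a measure"
  assumes hB: "(\<lambda>p. indicator (Bs (fst p)) (snd p) :: real) \<in> borel_measurable M2"
    and u: "u \<in> measurable N I01"
    and e: "(\<lambda>q. e (fst q) (snd q) :: real) \<in> borel_measurable (N \<Otimes>\<^sub>M I01)"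
  shows "(\<lambda>p. LINT x|I01. indicator (Bs (u p)) x * e p x) \<in> borel_measurable N"
proof -
  have "(\<lambda>q. (u (fst q), snd q)) \<in> measurable (N \<Otimes>\<^sub>M I01) M2"
    unfolding M2_def using u by measurable
  from measurable_compose[OF this hB]
  have "(\<lambda>q. indicator (Bs (u (fst q))) (snd q) :: real) \<in> borel_measurable (N \<Otimes>\<^sub>M I01)" by simp
  then have "(\<lambda>q. indicator (Bs (u (fst q))) (snd q) * e (fst q) (snd q)) \<in> borel_measurable (N \<Otimes>\<^sub>M I01)"
    using e by simp
  then show ?thesis
    using I01.borel_measurable_lebesgue_integral[of "\<lambda>p x. indicator (Bs (u p)) x * e p x" N]
    by (simp add: split_beta')
qed

lemma cut_norm_nonneg: "bd d B \<Longrightarrow> 0 \<le> cut_norm d"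
  using CN1[of d B "{}" "{}"] by simp

lemma int_le_const_I01:
  assumes "\<And>x. x \<in> {0..1} \<Longrightarrow> f x \<le> (C::real)" "0 \<le> C"
  shows "(LINT x|I01. f x) \<le> C"
proof (cases "integrable I01 f")
  case True
  have "(LINT x|I01. f x) \<le> (LINT x|I01. C)" using True assms by (intro integral_mono) auto
  also have "\<dots> = C" using measure_I01_space by simp
  finally show ?thesis .
qed (simp add: not_integrable_integral_eq assms)

definition GT :: "(real \<Rightarrow> real \<Rightarrow> real) \<Rightarrow> (real \<times> real) set \<Rightarrow> (real \<Rightarrow> real set) \<Rightarrow> real" where
  "GT w R Bs = (LINT p|M2. indicator R p *
        max 0 (LINT x|I01. indicator (Bs (fst p)) x * (w x (snd p) - w x (fst p))))"

lemma GT_cont: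
  fixes Bs :: "real \<Rightarrow> real set"
  assumes ga: "gm a" and gb: "gm b" and ba: "bd a 1" and bb: "bd b 1"
    and R: "(\<lambda>p. indicator R p :: real) \<in> borel_measurable M2" and A: "A \<in> sets I01" and m: "0 < m"
    and hB: "(\<lambda>p. indicator (Bs (fst p)) (snd p) :: real) \<in> borel_measurable M2"
    and hBs: "\<And>y. y \<in> {0..1} \<Longrightarrow> Bs y \<in> sets I01"
    and hS: "\<And>x y. x \<in> {0..1} \<Longrightarrow> y \<in> {0..1} \<Longrightarrow> kap m x \<noteq> kap m y \<Longrightarrow>
               (x \<in> Bs y \<longleftrightarrow> x \<in> A \<and> (kap m x < kap m y \<longleftrightarrow> c))"
  shows "GT a R Bs \<le> GT b R Bs + 2 * cut_norm (\<lambda>x y. a x y - b x y)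
           + (2 * real m * cut_norm (\<lambda>x y. a x y - b x y) + 2 / m)"
proof -
  define d where "d = (\<lambda>x y. a x y - b x y)"
  have gd: "gm d" using ga gb unfolding gm_def d_def by simp
  have bdd: "bd d 2" using ba bb unfolding bd_def d_def by (smt (verit))
  have cn0: "0 \<le> cut_norm d" by (rule cut_norm_nonneg[OF bdd])
  have mf: "fst \<in> measurable M2 I01" "snd \<in> measurable M2 I01" unfolding M2_def by measurable
  have mq: "(\<lambda>q. fst q) \<in> measurable (M2 \<Otimes>\<^sub>M I01) M2" "(\<lambda>q. snd q) \<in> measurable (M2 \<Otimes>\<^sub>M I01) I01"
     "(\<lambda>q. fst (fst q)) \<in> measurable (M2 \<Otimes>\<^sub>M I01) I01" "(\<lambda>q. snd (fst q)) \<in> measurable (M2 \<Otimes>\<^sub>M I01) I01"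
    unfolding M2_def by measurable
  define F :: "(real \<Rightarrow> real \<Rightarrow> real) \<Rightarrow> real \<times> real \<Rightarrow> real"
    where "F w p = (LINT x|I01. indicator (Bs (fst p)) x * (w x (snd p) - w x (fst p)))" for w p
  define H1 :: "real \<times> real \<Rightarrow> real" where "H1 p = (LINT x|I01. indicator (Bs (fst p)) x * d x (snd p))" for p
  define H2 :: "real \<times> real \<Rightarrow> real" where "H2 p = (LINT x|I01. indicator (Bs (fst p)) x * d x (fst p))" for p
  have Fm: "F w \<in> borel_measurable M2" if "gm w" for w
    unfolding F_def
    by (rule PM[OF hB mf(1)]) (use gm_comp[OF that mq(2) mq(4)] gm_comp[OF that mq(2) mq(3)] in simp)
  have H1m: "H1 \<in> borel_measurable M2" unfolding H1_def
    by (rule PM[OF hB mf(1)]) (use gm_comp[OF gd mq(2) mq(4)] in simp)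
  have H2m: "H2 \<in> borel_measurable M2" unfolding H2_def
    by (rule PM[OF hB mf(1)]) (use gm_comp[OF gd mq(2) mq(3)] in simp)
  have Fb: "\<bar>F w p\<bar> \<le> 2" if "bd w 1" "p \<in> space M2" for w p
    unfolding F_def
  proof (rule int_bound_I01)
    fix x :: real assume x: "x \<in> {0..1}"
    have p: "fst p \<in> {0..1}" "snd p \<in> {0..1}" using that(2) by (auto simp: mem_Times_iff)
    have "\<bar>w x (snd p)\<bar> \<le> 1" "\<bar>w x (fst p)\<bar> \<le> 1" using that(1) x p unfolding bd_def by auto
    then show "\<bar>indicator (Bs (fst p)) x * (w x (snd p) - w x (fst p))\<bar> \<le> 2"
      by (auto simp: indicator_def)
  qed
  have H1b: "\<bar>H1 p\<bar> \<le> 2" if "p \<in> space M2" for p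
    unfolding H1_def by (rule int_bound_I01) (use that bdd in \<open>auto simp: bd_def indicator_def mem_Times_iff\<close>)
  have H2b: "\<bar>H2 p\<bar> \<le> 2" if "p \<in> space M2" for p
    unfolding H2_def by (rule int_bound_I01) (use that bdd in \<open>auto simp: bd_def indicator_def mem_Times_iff\<close>)
  have split: "F a p = F b p + H1 p - H2 p" if p: "p \<in> space M2" for p
  proof -
    have ys: "fst p \<in> space I01" "snd p \<in> space I01" using p by (auto simp: mem_Times_iff)
    have mx: "(\<lambda>x. x) \<in> measurable I01 I01" by (rule measurable_ident_sets) simp
    have mc: "(\<lambda>x. fst p) \<in> measurable I01 I01" "(\<lambda>x. snd p) \<in> measurable I01 I01"
      using ys by (auto intro!: measurable_const)
    have ib: "(\<lambda>x. indicator (Bs (fst p)) x :: real) \<in> borel_measurable I01"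
      using borel_measurable_indicator[OF hBs[of "fst p"]] ys by simp
    have intg: "integrable I01 (\<lambda>x. indicator (Bs (fst p)) x * w x t)" if "gm w" "bd w C" "t \<in> space I01" for w t C
    proof (rule int_I01[where B=C])
      have "(\<lambda>x. t) \<in> measurable I01 I01" using that(3) by (auto intro!: measurable_const)
      then show "(\<lambda>x. indicator (Bs (fst p)) x * w x t) \<in> borel_measurable I01"
        using gm_comp[OF that(1) mx] ib by simp
      show "\<bar>indicator (Bs (fst p)) x * w x t\<bar> \<le> C" if "x \<in> {0..1}" for x
        using \<open>bd w C\<close> \<open>t \<in> space I01\<close> that bd_nonneg[OF \<open>bd w C\<close>] by (auto simp: bd_def indicator_def)
    qed
    note ia = intg[OF ga ba] and ib' = intg[OF gb bb] and id = intg[OF gd bdd]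
    have "F a p = (LINT x|I01. indicator (Bs (fst p)) x * a x (snd p) - indicator (Bs (fst p)) x * a x (fst p))"
      unfolding F_def by (simp add: right_diff_distrib)
    also have "\<dots> = (LINT x|I01. indicator (Bs (fst p)) x * a x (snd p)) - (LINT x|I01. indicator (Bs (fst p)) x * a x (fst p))"
      using ia[OF ys(2)] ia[OF ys(1)] by (rule Bochner_Integration.integral_diff)
    finally have Fa: "F a p = \<dots>" .
    have "F b p = (LINT x|I01. indicator (Bs (fst p)) x * b x (snd p) - indicator (Bs (fst p)) x * b x (fst p))"
      unfolding F_def by (simp add: right_diff_distrib)
    also have "\<dots> = (LINT x|I01. indicator (Bs (fst p)) x * b x (snd p)) - (LINT x|I01. indicator (Bs (fst p)) x * b x (fst p))"
      using ib'[OF ys(2)] ib'[OF ys(1)] by (rule Bochner_Integration.integral_diff)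
    finally have Fb: "F b p = \<dots>" .
    have "H1 p = (LINT x|I01. indicator (Bs (fst p)) x * a x (snd p) - indicator (Bs (fst p)) x * b x (snd p))"
      unfolding H1_def d_def by (simp add: right_diff_distrib)
    also have "\<dots> = (LINT x|I01. indicator (Bs (fst p)) x * a x (snd p)) - (LINT x|I01. indicator (Bs (fst p)) x * b x (snd p))"
      using ia[OF ys(2)] ib'[OF ys(2)] by (rule Bochner_Integration.integral_diff)
    finally have H1e: "H1 p = \<dots>" .
    have "H2 p = (LINT x|I01. indicator (Bs (fst p)) x * a x (fst p) - indicator (Bs (fst p)) x * b x (fst p))"
      unfolding H2_def d_def by (simp add: right_diff_distrib)
    also have "\<dots> = (LINT x|I01. indicator (Bs (fst p)) x * a x (fst p)) - (LINT x|I01. indicator (Bs (fst p)) x * b x (fst p))"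
      using ia[OF ys(1)] ib'[OF ys(1)] by (rule Bochner_Integration.integral_diff)
    finally have H2e: "H2 p = \<dots>" .
    show ?thesis unfolding Fa Fb H1e H2e by simp
  qed
  have iR: "(\<lambda>p. indicator R p :: real) \<in> borel_measurable M2" using R by simp
  have int1: "integrable M2 (\<lambda>p. indicator R p * max 0 (F w p))" if "gm w" "bd w 1" for w
  proof (rule int_M2[where B=2])
    show "(\<lambda>p. indicator R p * max 0 (F w p)) \<in> borel_measurable M2" using iR Fm[OF that(1)] by simp
    fix x y :: real assume "x \<in> {0..1}" "y \<in> {0..1}"
    then have "\<bar>F w (x,y)\<bar> \<le> 2" using Fb[OF that(2)] by auto
    then show "\<bar>indicator R (x,y) * max 0 (F w (x,y))\<bar> \<le> 2" by (auto simp: indicator_def)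
  qed
  have intH1: "integrable M2 (\<lambda>p. \<bar>H1 p\<bar>)" by (rule int_M2[where B=2]) (use H1m H1b in auto)
  have intH2: "integrable M2 (\<lambda>p. \<bar>H2 p\<bar>)" by (rule int_M2[where B=2]) (use H2m H2b in auto)
  have "GT a R Bs = (LINT p|M2. indicator R p * max 0 (F a p))" unfolding GT_def F_def ..
  also have "\<dots> \<le> (LINT p|M2. indicator R p * max 0 (F b p) + \<bar>H1 p\<bar> + \<bar>H2 p\<bar>)"
  proof (rule integral_mono)
    show "integrable M2 (\<lambda>p. indicator R p * max 0 (F a p))" by (rule int1[OF ga ba])
    show "integrable M2 (\<lambda>p. indicator R p * max 0 (F b p) + \<bar>H1 p\<bar> + \<bar>H2 p\<bar>)"
      using int1[OF gb bb] intH1 intH2 by simp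
    show "indicator R p * max 0 (F a p) \<le> indicator R p * max 0 (F b p) + \<bar>H1 p\<bar> + \<bar>H2 p\<bar>"
      if "p \<in> space M2" for p using split[OF that] by (auto simp: indicator_def)
  qed
  also have "\<dots> = GT b R Bs + (LINT p|M2. \<bar>H1 p\<bar>) + (LINT p|M2. \<bar>H2 p\<bar>)"
    using int1[OF gb bb] intH1 intH2 unfolding GT_def F_def by simp
  also have "(LINT p|M2. \<bar>H1 p\<bar>) \<le> 2 * cut_norm d"
  proof -
    have "(LINT p|M2. \<bar>H1 p\<bar>) = (LINT y|I01. LINT z|I01. \<bar>LINT x|I01. indicator (Bs y) x * d x z\<bar>)"
      using I01P.integral_fst[of "\<lambda>y z. \<bar>LINT x|I01. indicator (Bs y) x * d x z\<bar>"] intH1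
      unfolding M2_def H1_def by (simp add: split_beta')
    also have "\<dots> \<le> 2 * cut_norm d"
      by (rule int_le_const_I01) (use P1[OF gd bdd hBs] cn0 in auto)
    finally show ?thesis .
  qed
  also have "(LINT p|M2. \<bar>H2 p\<bar>) \<le> 2 * real m * cut_norm d + 2 / m"
  proof -
    have "(LINT p|M2. \<bar>H2 p\<bar>) = (LINT y|I01. LINT z|I01. \<bar>LINT x|I01. indicator (Bs y) x * d x y\<bar>)"
      using I01P.integral_fst[of "\<lambda>y z. \<bar>LINT x|I01. indicator (Bs y) x * d x y\<bar>"] intH2
      unfolding M2_def H2_def by (simp add: split_beta')
    also have "\<dots> = (LINT y|I01. \<bar>LINT x|I01. indicator (Bs y) x * d x y\<bar>)"
      using measure_I01_space by simp
    also have "\<dots> \<le> 2 * real m * cut_norm d + 2 / m"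
      by (rule P2[OF gd bdd A m hB hS])
    finally show ?thesis .
  qed
  finally show ?thesis unfolding d_def by simp
qed

lemma GT_int_meas:
  fixes Bs :: "real \<Rightarrow> real set"
  assumes hB: "(\<lambda>p. indicator (Bs (fst p)) (snd p) :: real) \<in> borel_measurable M2"
    and gw: "gm w" and R: "(\<lambda>p. indicator R p :: real) \<in> borel_measurable M2"
  shows "(\<lambda>p. indicator R p * max 0 (LINT x|I01. indicator (Bs (fst p)) x * (w x (snd p) - w x (fst p)))) \<in> borel_measurable M2"
proof -
  have mf: "fst \<in> measurable M2 I01" unfolding M2_def by measurable
  have mq: "(\<lambda>q. snd q) \<in> measurable (M2 \<Otimes>\<^sub>M I01) I01"
     "(\<lambda>q. fst (fst q)) \<in> measurable (M2 \<Otimes>\<^sub>M I01) I01" "(\<lambda>q. snd (fst q)) \<in> measurable (M2 \<Otimes>\<^sub>M I01) I01"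
    unfolding M2_def by measurable
  have "(\<lambda>p. LINT x|I01. indicator (Bs (fst p)) x * (w x (snd p) - w x (fst p))) \<in> borel_measurable M2"
    by (rule PM[OF hB mf]) (use gm_comp[OF gw mq(1) mq(3)] gm_comp[OF gw mq(1) mq(2)] in simp)
  then show ?thesis using R by simp
qed

lemma hB1: "A \<in> sets I01 \<Longrightarrow> (\<lambda>p. indicator (A \<inter> {0..fst p}) (snd p) :: real) \<in> borel_measurable M2"
proof -
  assume A: "A \<in> sets I01"
  have m: "fst \<in> measurable M2 I01" "snd \<in> measurable M2 I01" unfolding M2_def by measurable
  show ?thesis unfolding indicator_inter_arith using ind_set_meas[OF A m(2)] ind_le_meas[OF m(1) m(2)] by simp
qed

lemma hB2: "A \<in> sets I01 \<Longrightarrow> (\<lambda>p. indicator (A \<inter> {fst p..1}) (snd p) :: real) \<in> borel_measurable M2"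
proof -
  assume A: "A \<in> sets I01"
  have m: "fst \<in> measurable M2 I01" "snd \<in> measurable M2 I01" unfolding M2_def by measurable
  show ?thesis unfolding indicator_inter_arith using ind_set_meas[OF A m(2)] ind_le_meas[OF m(1) m(2)] by simp
qed

lemma hBs12:
  assumes A: "A \<in> sets I01"
  shows "A \<inter> {0..y} \<in> sets I01" "A \<inter> {y..1} \<in> sets I01"
proof -
  have "{x\<in>space I01. x \<le> y} \<in> sets I01" by measurable
  moreover have "A \<inter> {0..y} = A \<inter> {x\<in>space I01. x \<le> y}" using sets.sets_into_space[OF A] by auto
  ultimately show "A \<inter> {0..y} \<in> sets I01" using A by auto
  have "{x\<in>space I01. y \<le> x} \<in> sets I01" by measurable
  moreover have "A \<inter> {y..1} = A \<inter> {x\<in>space I01. y \<le> x}" using sets.sets_into_space[OF A] by auto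
  ultimately show "A \<inter> {y..1} \<in> sets I01" using A by auto
qed

definition R1 :: "(real \<times> real) set" where "R1 = {(y,z). y < z}"
definition R2 :: "(real \<times> real) set" where "R2 = {(u,v). v < u}"

lemma R_meas: "(\<lambda>p. indicator {(y,z). y < z} p :: real) \<in> borel_measurable M2"
     "(\<lambda>p. indicator {(u,v). v < u} p :: real) \<in> borel_measurable M2"
proof -
  have e1: "(\<lambda>p. indicator {(y,z). y < z} p :: real) = (\<lambda>p. if fst p < snd p then 1 else 0 :: real)"
    by (auto simp: indicator_def)
  show "(\<lambda>p. indicator {(y,z). y < z} p :: real) \<in> borel_measurable M2" unfolding e1 M2_def by measurable
  have e2: "(\<lambda>p. indicator {(u,v). v < u} p :: real) = (\<lambda>p. if snd p < fst p then 1 else 0 :: real)"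
    by (auto simp: indicator_def)
  show "(\<lambda>p. indicator {(u,v). v < u} p :: real) \<in> borel_measurable M2" unfolding e2 M2_def by measurable
qed

lemma hS1: assumes "0 < m" "x \<in> {0..1}" "y \<in> {0..1}" "kap m x \<noteq> kap m y"
  shows "x \<in> A \<inter> {0..y} \<longleftrightarrow> x \<in> A \<and> (kap m x < kap m y \<longleftrightarrow> True)"
proof (cases "kap m x < kap m y")
  case True then show ?thesis using kap_lt[OF assms(1-3)] assms by auto
next
  case False then have "kap m y < kap m x" using assms(4) by simp
  then show ?thesis using kap_lt[OF assms(1) assms(3) assms(2)] False by auto
qed

lemma hS2: assumes "0 < m" "x \<in> {0..1}" "y \<in> {0..1}" "kap m x \<noteq> kap m y"
  shows "x \<in> A \<inter> {y..1} \<longleftrightarrow> x \<in> A \<and> (kap m x < kap m y \<longleftrightarrow> False)"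
proof (cases "kap m x < kap m y")
  case True then show ?thesis using kap_lt[OF assms(1-3)] assms by auto
next
  case False then have "kap m y < kap m x" using assms(4) by simp
  then show ?thesis using kap_lt[OF assms(1) assms(3) assms(2)] False assms by auto
qed

lemma Gamma_A_GT:
  assumes gw: "gm w" and A: "A \<in> sets I01"
  shows "Gamma_A w A = GT w R1 (\<lambda>y. A \<inter> {0..y}) + GT w R2 (\<lambda>u. A \<inter> {u..1})"
proof -
  define g where "g p = indicator {(u,v). v < u} p * max 0 (LINT x|I01. indicator (A \<inter> {fst p..1}) x * (w x (snd p) - w x (fst p)))" for p :: "real \<times> real"
  define f where "f p = indicator {(y,z). y < z} p *
        max 0 (LINT x|I01. indicator (A \<inter> {snd p..1}) x * (w x (fst p) - w x (snd p)))" for p :: "real \<times> real"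
  have gm: "g \<in> borel_measurable M2"
    unfolding g_def using GT_int_meas[OF hB2[OF A] gw R_meas(2)] by simp
  have sw: "(\<lambda>p. (snd p, fst p)) \<in> measurable M2 M2" unfolding M2_def by measurable
  have fg: "f = (\<lambda>p. g (snd p, fst p))" unfolding f_def g_def by (auto simp: indicator_def fun_eq_iff)
  have fm: "f \<in> borel_measurable (I01 \<Otimes>\<^sub>M I01)"
    using measurable_compose[OF sw gm] unfolding fg M2_def by simp
  have "(LINT p|(I01 \<Otimes>\<^sub>M I01). f p) = (\<integral>(x,y). f (y,x) \<partial>(I01 \<Otimes>\<^sub>M I01))"
    using I01P.integral_product_swap[OF fm] by simp
  also have "\<dots> = GT w R2 (\<lambda>u. A \<inter> {u..1})"
    unfolding GT_def M2_def f_def R2_def by (simp add: split_beta' indicator_def)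
  finally have T2: "(LINT p|(I01 \<Otimes>\<^sub>M I01). f p) = GT w R2 (\<lambda>u. A \<inter> {u..1})" .
  show ?thesis unfolding Gamma_A_def T2[unfolded f_def] by (simp add: GT_def M2_def R1_def)
qed

lemma Gamma_A_cont:
  assumes ga: "gm a" and gb: "gm b" and ba: "bd a 1" and bb: "bd b 1"
    and A: "A \<in> sets I01" and m: "0 < m"
  shows "Gamma_A a A \<le> Gamma_A b A + 2 * (2 * cut_norm (\<lambda>x y. a x y - b x y)
           + (2 * real m * cut_norm (\<lambda>x y. a x y - b x y) + 2 / m))"
proof -
  have 1: "GT a R1 (\<lambda>y. A \<inter> {0..y}) \<le> GT b R1 (\<lambda>y. A \<inter> {0..y}) + 2 * cut_norm (\<lambda>x y. a x y - b x y)
           + (2 * real m * cut_norm (\<lambda>x y. a x y - b x y) + 2 / m)"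
    by (rule GT_cont[OF ga gb ba bb R_meas(1)[folded R1_def] A m hB1[OF A], of True]) (use hBs12[OF A] hS1[OF m] in auto)
  have 2: "GT a R2 (\<lambda>u. A \<inter> {u..1}) \<le> GT b R2 (\<lambda>u. A \<inter> {u..1}) + 2 * cut_norm (\<lambda>x y. a x y - b x y)
           + (2 * real m * cut_norm (\<lambda>x y. a x y - b x y) + 2 / m)"
    by (rule GT_cont[OF ga gb ba bb R_meas(2)[folded R2_def] A m hB2[OF A], of False]) (use hBs12[OF A] hS2[OF m] in auto)
  define K where "K = 2 * cut_norm (\<lambda>x y. a x y - b x y) + (2 * real m * cut_norm (\<lambda>x y. a x y - b x y) + 2 / m)"
  have h1: "GT a R1 (\<lambda>y. A \<inter> {0..y}) \<le> GT b R1 (\<lambda>y. A \<inter> {0..y}) + K" using 1 unfolding K_def by linarith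
  have h2: "GT a R2 (\<lambda>u. A \<inter> {u..1}) \<le> GT b R2 (\<lambda>u. A \<inter> {u..1}) + K" using 2 unfolding K_def by linarith
  have "Gamma_A a A \<le> Gamma_A b A + 2 * K" unfolding Gamma_A_GT[OF ga A] Gamma_A_GT[OF gb A] using h1 h2 by linarith
  then show ?thesis unfolding K_def .
qed




lemma Gamma_A_bounds:
  assumes bw: "bd w 1"
  shows "0 \<le> Gamma_A w A" "Gamma_A w A \<le> 4"
proof -
  show "0 \<le> Gamma_A w A" unfolding Gamma_A_def
    by (intro add_nonneg_nonneg Bochner_Integration.integral_nonneg) (auto simp: indicator_def)
  have inner: "\<bar>LINT x|I01. indicator S x * (w x u - w x v)\<bar> \<le> 2" if "u \<in> {0..1}" "v \<in> {0..1}" for S u v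
  proof (rule int_bound_I01)
    fix x :: real assume x: "x \<in> {0..1}"
    have "\<bar>w x u\<bar> \<le> 1" "\<bar>w x v\<bar> \<le> 1" using bw x that unfolding bd_def by auto
    then show "\<bar>indicator S x * (w x u - w x v)\<bar> \<le> 2" by (auto simp: indicator_def)
  qed
  have t1: "\<bar>LINT p|(I01 \<Otimes>\<^sub>M I01). indicator {(y,z). y < z} p *
        max 0 (LINT x|I01. indicator (A \<inter> {0..fst p}) x * (w x (snd p) - w x (fst p)))\<bar> \<le> 2"
    unfolding M2_def[symmetric]
  proof (rule int_bound_M2)
    fix x y :: real assume "x \<in> {0..1}" "y \<in> {0..1}"
    then have "\<bar>LINT t|I01. indicator (A \<inter> {0..x}) t * (w t y - w t x)\<bar> \<le> 2" by (rule inner[rotated])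
    then show "\<bar>indicator {(y,z). y < z} (x,y) * max 0 (LINT t|I01. indicator (A \<inter> {0..fst (x,y)}) t * (w t (snd (x,y)) - w t (fst (x,y))))\<bar> \<le> 2"
      by (auto simp: indicator_def)
  qed
  have t2: "\<bar>LINT p|(I01 \<Otimes>\<^sub>M I01). indicator {(y,z). y < z} p *
        max 0 (LINT x|I01. indicator (A \<inter> {snd p..1}) x * (w x (fst p) - w x (snd p)))\<bar> \<le> 2"
    unfolding M2_def[symmetric]
  proof (rule int_bound_M2)
    fix x y :: real assume "x \<in> {0..1}" "y \<in> {0..1}"
    then have "\<bar>LINT t|I01. indicator (A \<inter> {y..1}) t * (w t x - w t y)\<bar> \<le> 2" by (rule inner)
    then show "\<bar>indicator {(y,z). y < z} (x,y) * max 0 (LINT t|I01. indicator (A \<inter> {snd (x,y)..1}) t * (w t (fst (x,y)) - w t (snd (x,y))))\<bar> \<le> 2"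
      by (auto simp: indicator_def)
  qed
  show "Gamma_A w A \<le> 4" unfolding Gamma_A_def using t1 t2 by linarith
qed

lemma Gamma_A_le_Gamma: "bd w 1 \<Longrightarrow> A \<in> sets I01 \<Longrightarrow> Gamma_A w A \<le> Gamma w"
  unfolding Gamma_def
  by (rule cSup_upper) (auto intro!: bdd_aboveI[where M=4] simp: Gamma_A_bounds)

lemma Gamma_nonneg: "bd w 1 \<Longrightarrow> 0 \<le> Gamma w"
  using Gamma_A_le_Gamma[of w "{}"] Gamma_A_bounds(1)[of w "{}"] by auto

lemma Gamma_cont:
  assumes ga: "gm a" and gb: "gm b" and ba: "bd a 1" and bb: "bd b 1" and m: "0 < m"
  shows "Gamma a \<le> Gamma b + 2 * (2 * cut_norm (\<lambda>x y. a x y - b x y)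
           + (2 * real m * cut_norm (\<lambda>x y. a x y - b x y) + 2 / m))"
  unfolding Gamma_def[of a]
proof (rule cSup_least)
  show "{Gamma_A a A |A. A \<in> sets I01} \<noteq> {}" by auto
  fix g assume "g \<in> {Gamma_A a A |A. A \<in> sets I01}"
  then obtain A where A: "A \<in> sets I01" and g: "g = Gamma_A a A" by auto
  show "g \<le> Gamma b + 2 * (2 * cut_norm (\<lambda>x y. a x y - b x y)
           + (2 * real m * cut_norm (\<lambda>x y. a x y - b x y) + 2 / m))"
    unfolding g using Gamma_A_cont[OF ga gb ba bb A m] Gamma_A_le_Gamma[OF bb A] by linarith
qed

lemma meas_pres_cong:
  assumes "meas_pres f" "\<And>x. x \<in> {0..1} \<Longrightarrow> f x = g x"
  shows "meas_pres g"
proof -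
  have "g \<in> measurable I01 I01" using assms measurable_cong[of I01 f g I01] unfolding meas_pres_def by auto
  moreover have "g -` B \<inter> space I01 = f -` B \<inter> space I01" for B using assms(2) by auto
  ultimately show ?thesis using assms(1) unfolding meas_pres_def by simp
qed

lemma meas_pres_comp:
  assumes f: "meas_pres f" and g: "meas_pres g"
  shows "meas_pres (\<lambda>x. g (f x))"
  unfolding meas_pres_def
proof safe
  have mf: "f \<in> measurable I01 I01" and mg: "g \<in> measurable I01 I01" using f g unfolding meas_pres_def by auto
  show "(\<lambda>x. g (f x)) \<in> measurable I01 I01" using measurable_comp[OF mf mg] by (simp add: o_def)
  fix B assume B: "B \<in> sets I01"
  have gB: "g -` B \<inter> space I01 \<in> sets I01" using measurable_sets[OF mg B] .
  have eq: "(\<lambda>x. g (f x)) -` B \<inter> space I01 = f -` (g -` B \<inter> space I01) \<inter> space I01"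
    using measurable_space[OF mf] by auto
  have "emeasure I01 ((\<lambda>x. g (f x)) -` B \<inter> space I01) = emeasure I01 (f -` (g -` B \<inter> space I01) \<inter> space I01)"
    by (simp only: eq)
  also have "\<dots> = emeasure I01 (g -` B \<inter> space I01)" using f gB unfolding meas_pres_def by blast
  also have "\<dots> = emeasure I01 B" using g B unfolding meas_pres_def by blast
  finally show "emeasure I01 ((\<lambda>x. g (f x)) -` B \<inter> space I01) = emeasure I01 B" .
qed

lemma Phi_D:
  assumes "\<phi> \<in> Phi"
  shows "\<phi> \<in> measurable I01 I01" "\<And>x. x \<in> {0..1} \<Longrightarrow> \<phi> x \<in> {0..1}"
    "\<And>x. x \<in> {0..1} \<Longrightarrow> the_inv_into {0..1} \<phi> (\<phi> x) = x"
    "\<And>x. x \<in> {0..1} \<Longrightarrow> \<phi> (the_inv_into {0..1} \<phi> x) = x"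
    "\<And>x. x \<in> {0..1} \<Longrightarrow> the_inv_into {0..1} \<phi> x \<in> {0..1}"
    "the_inv_into {0..1} \<phi> \<in> measurable I01 I01"
proof -
  have b: "bij_betw \<phi> {0..1} {0..1}" and m: "meas_pres \<phi>" "meas_pres (the_inv_into {0..1} \<phi>)"
    using assms unfolding Phi_def by auto
  have inj: "inj_on \<phi> {0..1}" and im: "\<phi> ` {0..1} = {0..1}" using b unfolding bij_betw_def by auto
  show "\<phi> \<in> measurable I01 I01" "the_inv_into {0..1} \<phi> \<in> measurable I01 I01" using m unfolding meas_pres_def by auto
  fix x :: real assume x: "x \<in> {0..1}"
  show "\<phi> x \<in> {0..1}" using x im by auto
  show "the_inv_into {0..1} \<phi> (\<phi> x) = x" by (rule the_inv_into_f_f[OF inj x])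
  show "\<phi> (the_inv_into {0..1} \<phi> x) = x" by (rule f_the_inv_into_f[OF inj]) (use x im in simp)
  show "the_inv_into {0..1} \<phi> x \<in> {0..1}" by (rule the_inv_into_into[OF inj]) (use x im in auto)
qed

lemma id_Phi: "(\<lambda>x. x) \<in> Phi"
proof -
  have mp: "meas_pres (\<lambda>x. x)" unfolding meas_pres_def
  proof safe
    show "(\<lambda>x. x) \<in> measurable I01 I01" by (rule measurable_ident_sets) simp
    fix B assume "B \<in> sets I01"
    then have "B \<inter> space I01 = B" using sets.sets_into_space by blast
    then show "emeasure I01 ((\<lambda>x. x) -` B \<inter> space I01) = emeasure I01 B" by simp
  qed
  have "meas_pres (the_inv_into {0..1} (\<lambda>x::real. x))"
    by (rule meas_pres_cong[OF mp]) (auto simp: the_inv_into_f_eq)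
  then show ?thesis unfolding Phi_def using mp by (auto simp: bij_betw_def)
qed

lemma comp_Phi:
  assumes p: "\<phi> \<in> Phi" and q: "\<psi> \<in> Phi"
  shows "(\<lambda>x. \<psi> (\<phi> x)) \<in> Phi"
proof -
  have bp: "bij_betw \<phi> {0..1} {0..1}" and bq: "bij_betw \<psi> {0..1} {0..1}" using p q unfolding Phi_def by auto
  have bc: "bij_betw (\<lambda>x. \<psi> (\<phi> x)) {0..1} {0..1}" using bij_betw_trans[OF bp bq] by (simp add: o_def)
  have mpc: "meas_pres (\<lambda>x. \<psi> (\<phi> x))" using meas_pres_comp p q unfolding Phi_def by auto
  have mpi: "meas_pres (\<lambda>x. the_inv_into {0..1} \<phi> (the_inv_into {0..1} \<psi> x))"
    using meas_pres_comp p q unfolding Phi_def by auto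
  have "meas_pres (the_inv_into {0..1} (\<lambda>x. \<psi> (\<phi> x)))"
  proof (rule meas_pres_cong[OF mpi])
    fix x :: real assume x: "x \<in> {0..1}"
    show "the_inv_into {0..1} \<phi> (the_inv_into {0..1} \<psi> x) = the_inv_into {0..1} (\<lambda>x. \<psi> (\<phi> x)) x"
    proof (rule the_inv_into_f_eq[symmetric])
      show "inj_on (\<lambda>x. \<psi> (\<phi> x)) {0..1}" using bc unfolding bij_betw_def by simp
      show "\<psi> (\<phi> (the_inv_into {0..1} \<phi> (the_inv_into {0..1} \<psi> x))) = x"
        using Phi_D[OF p] Phi_D[OF q] x by simp
      show "the_inv_into {0..1} \<phi> (the_inv_into {0..1} \<psi> x) \<in> {0..1}"
        using Phi_D[OF p] Phi_D[OF q] x by simp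
    qed
  qed
  then show ?thesis unfolding Phi_def using bc mpc by simp
qed

lemma inv_Phi:
  assumes p: "\<phi> \<in> Phi"
  shows "the_inv_into {0..1} \<phi> \<in> Phi"
proof -
  have bp: "bij_betw \<phi> {0..1} {0..1}" using p unfolding Phi_def by auto
  have bi: "bij_betw (the_inv_into {0..1} \<phi>) {0..1} {0..1}" by (rule bij_betw_the_inv_into[OF bp])
  have "meas_pres (the_inv_into {0..1} (the_inv_into {0..1} \<phi>))"
  proof (rule meas_pres_cong)
    show "meas_pres \<phi>" using p unfolding Phi_def by auto
    fix x :: real assume x: "x \<in> {0..1}"
    show "\<phi> x = the_inv_into {0..1} (the_inv_into {0..1} \<phi>) x"
      by (rule the_inv_into_f_eq[symmetric]) (use bi Phi_D[OF p] x in \<open>auto simp: bij_betw_def\<close>)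
  qed
  then show ?thesis using p bi unfolding Phi_def by auto
qed


lemma W0_D: "w \<in> W0 \<Longrightarrow> gm w \<and> bd w 1"
  unfolding W0_def gm_def bd_def M2_def by (auto simp: split_beta')

lemma relabel_gm_bd:
  assumes g: "gm w" and b: "bd w 1" and p: "\<phi> \<in> Phi"
  shows "gm (relabel w \<phi>)" "bd (relabel w \<phi>) 1"
proof -
  have m: "(\<lambda>q. \<phi> (fst q)) \<in> measurable M2 I01" "(\<lambda>q. \<phi> (snd q)) \<in> measurable M2 I01"
    using Phi_D(1)[OF p] unfolding M2_def by measurable
  show "gm (relabel w \<phi>)" unfolding gm_def relabel_def using gm_comp[OF g m(1) m(2)] .
  show "bd (relabel w \<phi>) 1" using b Phi_D(2)[OF p] unfolding bd_def relabel_def by auto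
qed

lemma cut_norm_cong:
  assumes "\<And>x y. x \<in> {0..1} \<Longrightarrow> y \<in> {0..1} \<Longrightarrow> f x y = g x y"
  shows "cut_norm f = cut_norm g"
proof -
  have "(LINT p|(I01 \<Otimes>\<^sub>M I01). indicator (S \<times> T) p * f (fst p) (snd p)) =
        (LINT p|(I01 \<Otimes>\<^sub>M I01). indicator (S \<times> T) p * g (fst p) (snd p))" for S T
    by (rule Bochner_Integration.integral_cong) (use assms in \<open>auto simp: space_pair_measure\<close>)
  then show ?thesis unfolding cut_norm_def by simp
qed

lemma cut_norm_neg: "cut_norm (\<lambda>x y. - f x y) = cut_norm f"
  unfolding cut_norm_def by simp

lemma distr_I01: assumes "meas_pres \<phi>" shows "distr I01 I01 \<phi> = I01"
proof (rule measure_eqI)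
  show "sets (distr I01 I01 \<phi>) = sets I01" by simp
  fix A assume "A \<in> sets (distr I01 I01 \<phi>)"
  then have A: "A \<in> sets I01" by simp
  have m: "\<phi> \<in> measurable I01 I01" using assms unfolding meas_pres_def by auto
  show "emeasure (distr I01 I01 \<phi>) A = emeasure I01 A"
    using assms A unfolding meas_pres_def by (simp add: emeasure_distr[OF m A])
qed

lemma distr_M2: assumes p: "\<phi> \<in> Phi"
  shows "distr M2 M2 (\<lambda>(x,y). (\<phi> x, \<phi> y)) = M2"
proof -
  have mp: "meas_pres \<phi>" using p unfolding Phi_def by auto
  have m: "\<phi> \<in> measurable I01 I01" by (rule Phi_D(1)[OF p])
  have "distr I01 I01 \<phi> \<Otimes>\<^sub>M distr I01 I01 \<phi> = distr (I01 \<Otimes>\<^sub>M I01) (I01 \<Otimes>\<^sub>M I01) (\<lambda>(x, y). (\<phi> x, \<phi> y))"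
    by (rule pair_measure_distr[OF m m]) (simp add: distr_I01[OF mp] I01.sigma_finite_measure_axioms)
  then show ?thesis unfolding distr_I01[OF mp] M2_def by simp
qed

lemma cut_norm_relabel_le:
  assumes g: "gm f" and b: "bd f B" and p: "\<phi> \<in> Phi"
  shows "cut_norm (relabel f \<phi>) \<le> cut_norm f"
  unfolding cut_norm_def[of "relabel f \<phi>"] M2_def[symmetric]
proof (rule cSup_least)
  show "{\<bar>LINT p|M2. indicator (S \<times> T) p * relabel f \<phi> (fst p) (snd p)\<bar> |S T. S \<in> sets I01 \<and> T \<in> sets I01} \<noteq> {}"
    by blast
  fix v assume "v \<in> {\<bar>LINT p|M2. indicator (S \<times> T) p * relabel f \<phi> (fst p) (snd p)\<bar> |S T. S \<in> sets I01 \<and> T \<in> sets I01}"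
  then obtain S T where S: "S \<in> sets I01" and T: "T \<in> sets I01"
    and v: "v = \<bar>LINT p|M2. indicator (S \<times> T) p * relabel f \<phi> (fst p) (snd p)\<bar>" by blast
  define \<psi> where "\<psi> = the_inv_into {0..1} \<phi>"
  have m\<psi>: "\<psi> \<in> measurable I01 I01" unfolding \<psi>_def by (rule Phi_D(6)[OF p])
  define S' where "S' = \<psi> -` S \<inter> space I01"
  define T' where "T' = \<psi> -` T \<inter> space I01"
  have S': "S' \<in> sets I01" unfolding S'_def by (rule measurable_sets[OF m\<psi> S])
  have T': "T' \<in> sets I01" unfolding T'_def by (rule measurable_sets[OF m\<psi> T])
  define h where "h q = indicator (S' \<times> T') q * f (fst q) (snd q)" for q :: "real \<times> real"
  have hm: "h \<in> borel_measurable M2"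
  proof -
    have mf: "fst \<in> measurable M2 I01" "snd \<in> measurable M2 I01" unfolding M2_def by measurable
    have "(\<lambda>q. indicator S' (fst q) * indicator T' (snd q) * f (fst q) (snd q) :: real) \<in> borel_measurable M2"
      using ind_set_meas[OF S' mf(1)] ind_set_meas[OF T' mf(2)] g[unfolded gm_def] by simp
    then show ?thesis unfolding h_def by (simp add: indicator_times mult_ac)
  qed
  have mP: "(\<lambda>(x,y). (\<phi> x, \<phi> y)) \<in> measurable M2 M2" using Phi_D(1)[OF p] unfolding M2_def by measurable
  have "(LINT p|M2. indicator (S \<times> T) p * relabel f \<phi> (fst p) (snd p)) = (LINT p|M2. h ((\<lambda>(x,y). (\<phi> x, \<phi> y)) p))"
  proof (rule Bochner_Integration.integral_cong[OF refl])
    fix p assume "p \<in> space M2"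
    then have p01: "fst p \<in> {0..1}" "snd p \<in> {0..1}" by (auto simp: mem_Times_iff)
    have "\<phi> (fst p) \<in> S' \<longleftrightarrow> fst p \<in> S" unfolding S'_def \<psi>_def using Phi_D[OF p] p01 by auto
    moreover have "\<phi> (snd p) \<in> T' \<longleftrightarrow> snd p \<in> T" unfolding T'_def \<psi>_def using Phi_D[OF p] p01 by auto
    ultimately show "indicator (S \<times> T) p * relabel f \<phi> (fst p) (snd p) = h ((\<lambda>(x,y). (\<phi> x, \<phi> y)) p)"
      unfolding h_def relabel_def by (auto simp: indicator_def split_beta' mem_Times_iff)
  qed
  also have "\<dots> = integral\<^sup>L (distr M2 M2 (\<lambda>(x,y). (\<phi> x, \<phi> y))) h"
    by (rule integral_distr[OF mP hm, symmetric])
  also have "\<dots> = (LINT q|M2. indicator (S' \<times> T') q * f (fst q) (snd q))"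
    unfolding distr_M2[OF p] h_def ..
  finally have "v = \<bar>LINT q|M2. indicator (S' \<times> T') q * f (fst q) (snd q)\<bar>" using v by simp
  then show "v \<le> cut_norm f" using CN1[OF b S' T'] by simp
qed


lemma Gamma_tilde_lower:
  assumes w: "w \<in> W0" and p: "\<phi> \<in> Phi"
  shows "Gamma_tilde w \<le> Gamma (relabel w \<phi>)"
  unfolding Gamma_tilde_def
proof (rule cInf_lower)
  show "Gamma (relabel w \<phi>) \<in> {Gamma (relabel w \<phi>) |\<phi>. \<phi> \<in> Phi}" using p by blast
  show "bdd_below {Gamma (relabel w \<phi>) |\<phi>. \<phi> \<in> Phi}"
    using W0_D[OF w] by (auto intro!: bdd_belowI[where m=0] Gamma_nonneg relabel_gm_bd)
qed

lemma Gamma_tilde_greatest: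
  assumes "\<And>\<phi>. \<phi> \<in> Phi \<Longrightarrow> x \<le> Gamma (relabel w \<phi>)"
  shows "x \<le> Gamma_tilde w"
  unfolding Gamma_tilde_def by (rule cInf_greatest) (use assms id_Phi in auto)

lemma Gt_step:
  assumes u: "u \<in> W0" and w: "w \<in> W0" and q: "\<psi> \<in> Phi" and m: "0 < m"
  defines "c \<equiv> cut_norm (\<lambda>x y. u x y - relabel w \<psi> x y)"
  shows "Gamma_tilde w \<le> Gamma_tilde u + (4 + 4 * real m) * c + 4 / m"
    "Gamma_tilde u \<le> Gamma_tilde w + (4 + 4 * real m) * c + 4 / m"
proof -
  have gu: "gm u" and bu: "bd u 1" and gw: "gm w" and bw: "bd w 1" using W0_D[OF u] W0_D[OF w] by auto
  define D where "D = (\<lambda>x y. u x y - relabel w \<psi> x y)"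
  have gD: "gm D" using gu relabel_gm_bd(1)[OF gw bw q] unfolding gm_def D_def by simp
  have bD: "bd D 2" using bu relabel_gm_bd(2)[OF gw bw q] unfolding bd_def D_def by (smt (verit))
  have cD: "c = cut_norm D" unfolding c_def D_def ..
  have Kmono: "2 * (2 * c' + (2 * real m * c' + 2 / m)) \<le> (4 + 4 * real m) * c + 4 / m" if "c' \<le> c" for c'
  proof -
    have "(4 + 4 * real m) * c' \<le> (4 + 4 * real m) * c" using that by (intro mult_left_mono) auto
    then show ?thesis by (simp add: algebra_simps)
  qed
  show "Gamma_tilde w \<le> Gamma_tilde u + (4 + 4 * real m) * c + 4 / m"
  proof -
    have "Gamma_tilde w - ((4 + 4 * real m) * c + 4 / m) \<le> Gamma_tilde u"
    proof (rule Gamma_tilde_greatest)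
      fix \<phi> assume p: "\<phi> \<in> Phi"
      have pc: "(\<lambda>x. \<psi> (\<phi> x)) \<in> Phi" by (rule comp_Phi[OF p q])
      have "Gamma_tilde w \<le> Gamma (relabel w (\<lambda>x. \<psi> (\<phi> x)))" by (rule Gamma_tilde_lower[OF w pc])
      also have "\<dots> \<le> Gamma (relabel u \<phi>) + 2 * (2 * cut_norm (\<lambda>x y. relabel w (\<lambda>x. \<psi> (\<phi> x)) x y - relabel u \<phi> x y)
           + (2 * real m * cut_norm (\<lambda>x y. relabel w (\<lambda>x. \<psi> (\<phi> x)) x y - relabel u \<phi> x y) + 2 / m))"
        by (rule Gamma_cont[OF relabel_gm_bd(1)[OF gw bw pc] relabel_gm_bd(1)[OF gu bu p]
              relabel_gm_bd(2)[OF gw bw pc] relabel_gm_bd(2)[OF gu bu p] m])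
      also have "\<dots> \<le> Gamma (relabel u \<phi>) + ((4 + 4 * real m) * c + 4 / m)"
      proof -
        have "cut_norm (\<lambda>x y. relabel w (\<lambda>x. \<psi> (\<phi> x)) x y - relabel u \<phi> x y) = cut_norm (\<lambda>x y. - relabel D \<phi> x y)"
          unfolding D_def relabel_def by simp
        also have "\<dots> = cut_norm (relabel D \<phi>)" by (rule cut_norm_neg)
        also have "\<dots> \<le> c" unfolding cD by (rule cut_norm_relabel_le[OF gD bD p])
        finally show ?thesis by (rule add_left_mono[OF Kmono])
      qed
      finally show "Gamma_tilde w - ((4 + 4 * real m) * c + 4 / m) \<le> Gamma (relabel u \<phi>)" by simp
    qed
    then show ?thesis by simp
  qed
  show "Gamma_tilde u \<le> Gamma_tilde w + (4 + 4 * real m) * c + 4 / m"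
  proof -
    have "Gamma_tilde u - ((4 + 4 * real m) * c + 4 / m) \<le> Gamma_tilde w"
    proof (rule Gamma_tilde_greatest)
      fix \<phi> assume p: "\<phi> \<in> Phi"
      define ch where "ch = (\<lambda>x. the_inv_into {0..1} \<psi> (\<phi> x))"
      have pc: "ch \<in> Phi" unfolding ch_def by (rule comp_Phi[OF p inv_Phi[OF q]])
      have "Gamma_tilde u \<le> Gamma (relabel u ch)" by (rule Gamma_tilde_lower[OF u pc])
      also have "\<dots> \<le> Gamma (relabel w \<phi>) + 2 * (2 * cut_norm (\<lambda>x y. relabel u ch x y - relabel w \<phi> x y)
           + (2 * real m * cut_norm (\<lambda>x y. relabel u ch x y - relabel w \<phi> x y) + 2 / m))"
        by (rule Gamma_cont[OF relabel_gm_bd(1)[OF gu bu pc] relabel_gm_bd(1)[OF gw bw p]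
              relabel_gm_bd(2)[OF gu bu pc] relabel_gm_bd(2)[OF gw bw p] m])
      also have "\<dots> \<le> Gamma (relabel w \<phi>) + ((4 + 4 * real m) * c + 4 / m)"
      proof -
        have "cut_norm (\<lambda>x y. relabel u ch x y - relabel w \<phi> x y) = cut_norm (relabel D ch)"
        proof (rule cut_norm_cong)
          fix x y :: real assume x: "x \<in> {0..1}" and y: "y \<in> {0..1}"
          have "\<psi> (ch x) = \<phi> x" "\<psi> (ch y) = \<phi> y"
            unfolding ch_def using Phi_D(2)[OF p] Phi_D(4)[OF q] x y by auto
          then show "relabel u ch x y - relabel w \<phi> x y = relabel D ch x y"
            unfolding D_def relabel_def by simp
        qed
        also have "\<dots> \<le> c" unfolding cD by (rule cut_norm_relabel_le[OF gD bD pc])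
        finally show ?thesis by (rule add_left_mono[OF Kmono])
      qed
      finally show "Gamma_tilde u - ((4 + 4 * real m) * c + 4 / m) \<le> Gamma (relabel w \<phi>)" by simp
    qed
    then show ?thesis by simp
  qed
qed

lemma Gt_bound:
  assumes u: "u \<in> W0" and w: "w \<in> W0" and m: "0 < m"
  shows "\<bar>Gamma_tilde u - Gamma_tilde w\<bar> \<le> (4 + 4 * real m) * cut_dist u w + 4 / m"
proof (rule field_le_epsilon)
  fix e :: real assume e: "0 < e"
  define L where "L = 4 + 4 * real m"
  have L: "0 < L" unfolding L_def by simp
  have ne: "{cut_norm (\<lambda>x y. u x y - relabel w \<phi> x y) |\<phi>. \<phi> \<in> Phi} \<noteq> {}" using id_Phi by blast
  have "Inf {cut_norm (\<lambda>x y. u x y - relabel w \<phi> x y) |\<phi>. \<phi> \<in> Phi} < cut_dist u w + e / L"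
    unfolding cut_dist_def using e L by simp
  from cInf_lessD[OF ne this] obtain \<psi> where q: "\<psi> \<in> Phi"
    and lt: "cut_norm (\<lambda>x y. u x y - relabel w \<psi> x y) < cut_dist u w + e / L" by blast
  have "L * cut_norm (\<lambda>x y. u x y - relabel w \<psi> x y) \<le> L * (cut_dist u w + e / L)"
    using lt L by (intro mult_left_mono) auto
  also have "\<dots> = L * cut_dist u w + e" using L by (simp add: field_simps)
  finally have le: "L * cut_norm (\<lambda>x y. u x y - relabel w \<psi> x y) \<le> L * cut_dist u w + e" .
  show "\<bar>Gamma_tilde u - Gamma_tilde w\<bar> \<le> (4 + 4 * real m) * cut_dist u w + 4 / m + e"
    using Gt_step[OF u w q m] le unfolding L_def by linarith
qed

theorem mainTheorem9:
  fixes w :: "real \<Rightarrow> real \<Rightarrow> real" and ws :: "nat \<Rightarrow> real \<Rightarrow> real \<Rightarrow> real"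
  assumes "w \<in> W0" and "\<And>n. ws n \<in> W0"
    and "(\<lambda>n. cut_dist (ws n) w) \<longlonglongrightarrow> 0"
  shows "(\<lambda>n. Gamma_tilde (ws n)) \<longlonglongrightarrow> Gamma_tilde w"
proof (rule LIMSEQ_I)
  fix r :: real assume r: "0 < r"
  define m where "m = nat \<lceil>8 / r\<rceil> + 1"
  have m0: "0 < m" unfolding m_def by simp
  have "8 / r \<le> real (nat \<lceil>8 / r\<rceil>)" by linarith
  then have "8 / r < real m" unfolding m_def by simp
  then have "8 < r * real m" using r by (simp add: field_simps)
  then have m4: "4 / real m < r / 2" using m0 r by (simp add: field_simps)
  define L where "L = 4 + 4 * real m"
  have L: "0 < L" unfolding L_def by simp
  from LIMSEQ_D[OF assms(3), of "r / (2 * L)"] r L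
  obtain no where no: "\<And>n. n \<ge> no \<Longrightarrow> norm (cut_dist (ws n) w - 0) < r / (2 * L)" by auto
  show "\<exists>no. \<forall>n\<ge>no. norm (Gamma_tilde (ws n) - Gamma_tilde w) < r"
  proof (intro exI allI impI)
    fix n assume "no \<le> n"
    then have "\<bar>cut_dist (ws n) w\<bar> < r / (2 * L)" using no by auto
    then have c: "cut_dist (ws n) w < r / (2 * L)" by linarith
    have "L * cut_dist (ws n) w \<le> L * (r / (2 * L))" using c L by (intro mult_left_mono) auto
    also have "\<dots> = r / 2" using L by simp
    finally have "L * cut_dist (ws n) w \<le> r / 2" .
    then show "norm (Gamma_tilde (ws n) - Gamma_tilde w) < r"
      using Gt_bound[OF assms(2)[of n] assms(1) m0] m4 unfolding L_def by simp
  qed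
qed


end
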